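(* Let $H$ be a traceless hermitian $5\times 5$ matrix with pairwise distinct eigenvalues $\lambda_1,\dots,\lambda_5$, let $C(z)=\prod_{k=1}^5(z-\lambda_k)$, and let $F_5(t)=\sum_{k=1}^5 \exp(i\lambda_k t)/C'(\lambda_k)$. Then for all real $t$, $$\exp(itH)=\Big[H^4-iH^3\frac{d}{dt}-H^2\Big(\tfrac12\operatorname{tr}(H^2)+\frac{d^2}{dt^2}\Big)+H\Big(-\tfrac13\operatorname{tr}(H^3)+\tfrac12 i\operatorname{tr}(H^2)\frac{d}{dt}+i\frac{d^3}{dt^3}\Big)$$ $$+I\Big(\tfrac18(\operatorname{tr}(H^2))^2-\tfrac14\operatorname{tr}(H^4)+\tfrac13\operatorname{tr}(H^3)\,i\frac{d}{dt}+\tfrac12\operatorname{tr}(H^2)\frac{d^2}{dt^2}+\frac{d^4}{dt^4}\Big)\Big]F_5(t).$$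
   Context: $I$ is the $5\times5$ identity matrix; a matrix coefficient multiplying a differential operator means the operator is applied to $F_5(t)$ and the result multiplies the matrix. *)

theory Defs
  imports "HOL-Analysis.Analysis" "HOL-Computational_Algebra.Polynomial" "HOL-Library.Numeral_Type"
begin

type_synonym cmat5 = "complex^5^5"

definition mpow :: "complex^'n^'n \<Rightarrow> nat \<Rightarrow> complex^'n^'n" where
  "mpow A n = ((\<lambda>B. A ** B) ^^ n) (mat 1)"

definition mexp :: "complex^'n^'n \<Rightarrow> complex^'n^'n" where
  "mexp A = (\<chi> i j. \<Sum>n. mpow A n $ i $ j / of_nat (fact n))"

definition msc :: "complex \<Rightarrow> complex^'n^'n \<Rightarrow> complex^'n^'n" where
  "msc c A = (\<chi> i j. c * A $ i $ j)"

definition hermitian :: "complex^'n^'n \<Rightarrow> bool" where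
  "hermitian A \<longleftrightarrow> (\<forall>i j. A $ i $ j = cnj (A $ j $ i))"

definition nderiv :: "nat \<Rightarrow> (real \<Rightarrow> complex) \<Rightarrow> real \<Rightarrow> complex" where
  "nderiv n f = ((\<lambda>g t. vector_derivative g (at t)) ^^ n) f"

definition charC :: "(5 \<Rightarrow> real) \<Rightarrow> complex poly" where
  "charC lam = (\<Prod>k\<in>UNIV. [:- complex_of_real (lam k), 1:])"

definition F5 :: "(5 \<Rightarrow> real) \<Rightarrow> real \<Rightarrow> complex" where
  "F5 lam t = (\<Sum>k\<in>UNIV. exp (\<i> * complex_of_real (lam k * t)) /
                 poly (pderiv (charC lam)) (complex_of_real (lam k)))"

end

theory Submission imports Defs begin

lemma nderiv_Suc: "nderiv (Suc m) f = (\<lambda>t. vector_derivative (nderiv m f) (at t))"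
  by (simp add: nderiv_def)

lemma hfd: "((\<lambda>z. \<Sum>k\<in>UNIV. w k * exp (\<i> * (a k * z))) has_field_derivative (\<Sum>k\<in>UNIV. w k * (exp (\<i> * (a k * x)) * (\<i> * a k)))) (at x)"
  for w a :: "'a::finite \<Rightarrow> complex"
  by (auto intro!: derivative_eq_intros simp: mult_ac)

lemma nderiv_sum:
  fixes l :: "'a::finite \<Rightarrow> real" and d :: "'a \<Rightarrow> complex"
  shows "nderiv m (\<lambda>t. \<Sum>k\<in>UNIV. exp (\<i> * complex_of_real (l k * t)) / d k) =
    (\<lambda>t. \<Sum>k\<in>UNIV. (\<i> * complex_of_real (l k))^m * exp (\<i> * complex_of_real (l k * t)) / d k)"
proof (induction m)
  case 0
  then show ?case by (simp add: nderiv_def)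
next
  case (Suc m)
  show ?case
  proof (rule ext)
    fix t :: real
    define f where "f = (\<lambda>z. \<Sum>k\<in>UNIV. ((\<i> * complex_of_real (l k))^m / d k) * exp (\<i> * (complex_of_real (l k) * z)))"
    have "(f has_field_derivative (\<Sum>k\<in>UNIV. ((\<i> * complex_of_real (l k))^m / d k) * (exp (\<i> * (complex_of_real (l k) * of_real t)) * (\<i> * complex_of_real (l k))))) (at (of_real t))"
      unfolding f_def by (rule hfd)
    from has_vector_derivative_real_field[OF this]
    have "((\<lambda>x. f (of_real x)) has_vector_derivative (\<Sum>k\<in>UNIV. (\<i> * complex_of_real (l k))^Suc m * exp (\<i> * complex_of_real (l k * t)) / d k)) (at t)"
      by (simp add: divide_inverse mult_ac)
    moreover have "(\<lambda>x. f (of_real x)) = nderiv m (\<lambda>t. \<Sum>k\<in>UNIV. exp (\<i> * complex_of_real (l k * t)) / d k)"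
      unfolding Suc f_def by (simp add: divide_inverse mult_ac)
    ultimately have "(nderiv m (\<lambda>t. \<Sum>k\<in>UNIV. exp (\<i> * complex_of_real (l k * t)) / d k) has_vector_derivative (\<Sum>k\<in>UNIV. (\<i> * complex_of_real (l k))^Suc m * exp (\<i> * complex_of_real (l k * t)) / d k)) (at t)"
      by simp
    then show "nderiv (Suc m) (\<lambda>t. \<Sum>k\<in>UNIV. exp (\<i> * complex_of_real (l k * t)) / d k) t =
       (\<Sum>k\<in>UNIV. (\<i> * complex_of_real (l k))^Suc m * exp (\<i> * complex_of_real (l k * t)) / d k)"
      unfolding nderiv_Suc by (simp add: vector_derivative_at)
  qed
qed

lemma nderiv_F5: "nderiv m (F5 lam) t = (\<Sum>k\<in>UNIV. (\<i> * complex_of_real (lam k))^m * exp (\<i> * complex_of_real (lam k * t)) / poly (pderiv (charC lam)) (complex_of_real (lam k)))"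
  unfolding F5_def nderiv_sum by simp

lemma exp_sums: "(\<lambda>n. x^n / of_nat (fact n)) sums exp (x::complex)"
  using exp_converges[of x] by (simp add: scaleR_conv_of_real divide_inverse mult.commute)
lemma exhaust_5:
  fixes x :: 5
  shows "x = 1 \<or> x = 2 \<or> x = 3 \<or> x = 4 \<or> x = 5"
proof (induct x)
  case (of_int z)
  then have "z = 0 \<or> z = 1 \<or> z = 2 \<or> z = 3 \<or> z = 4" by fastforce
  then show ?case by auto
qed
lemma UNIV_5: "UNIV = {1, 2, 3, 4, 5::5}"
  using exhaust_5 by auto
lemma sum_5: "sum f (UNIV::5 set) = f 1 + f 2 + f 3 + f 4 + f 5"
  unfolding UNIV_5 by (simp add: algebra_simps)
lemma prod_5: "prod f (UNIV::5 set) = f 1 * f 2 * f 3 * f 4 * f 5"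
  unfolding UNIV_5 by (simp add: algebra_simps)

lemma newton:
  fixes a b c d e z :: complex
  assumes "a+b+c+d+e = 0"
  defines "p2 \<equiv> a^2+b^2+c^2+d^2+e^2" and "p3 \<equiv> a^3+b^3+c^3+d^3+e^3" and "p4 \<equiv> a^4+b^4+c^4+d^4+e^4"
  shows "(z-a)*(z-b)*(z-c)*(z-d)*(z-e) = z^5 - p2/2*z^3 - p3/3*z^2 + (p2^2/8 - p4/4)*z - a*b*c*d*e"
proof -
  have e: "e = -(a+b+c+d)" using assms(1) by (simp add: algebra_simps eq_neg_iff_add_eq_0)
  show ?thesis unfolding p2_def p3_def p4_def e by (simp add: field_simps) algebra
qed

definition Cz :: "complex \<Rightarrow> complex \<Rightarrow> complex \<Rightarrow> complex \<Rightarrow> complex \<Rightarrow> complex" where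
  "Cz p2 p3 p4 c0 z = z^5 - p2/2*z^3 - p3/3*z^2 + (p2^2/8 - p4/4)*z - c0"

definition Qf :: "complex \<Rightarrow> complex \<Rightarrow> complex \<Rightarrow> complex \<Rightarrow> complex \<Rightarrow> complex" where
  "Qf p2 p3 p4 x y = (y^4 - p2/2*y^2 - p3/3*y + p2^2/8 - p4/4) + (y^3 - p2/2*y - p3/3)*x + (y^2 - p2/2)*x^2 + y*x^3 + x^4"

lemma Qf_diff: "(x - y) * Qf p2 p3 p4 x y = Cz p2 p3 p4 c0 x - Cz p2 p3 p4 c0 y"
  unfolding Qf_def Cz_def by algebra

lemma poly_Qp: "poly [: y^4 - p2/2*y^2 - p3/3*y + p2^2/8 - p4/4, y^3 - p2/2*y - p3/3, y^2 - p2/2, y, 1 :] x = Qf p2 p3 p4 x y"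
  unfolding Qf_def by (simp add: algebra_simps power2_eq_square power3_eq_cube power4_eq_xxxx)

lemma scalar_main:
  fixes lam :: "5 \<Rightarrow> real" and E :: "5 \<Rightarrow> complex"
  assumes inj: "inj lam" and tr0: "(\<Sum>k\<in>UNIV. complex_of_real (lam k)) = 0"
  defines "L \<equiv> \<lambda>k. complex_of_real (lam k)"
  defines "p2 \<equiv> (\<Sum>k\<in>UNIV. L k ^ 2)" and "p3 \<equiv> (\<Sum>k\<in>UNIV. L k ^ 3)" and "p4 \<equiv> (\<Sum>k\<in>UNIV. L k ^ 4)"
  defines "d \<equiv> \<lambda>k. poly (pderiv (charC lam)) (L k)"
  shows "(\<Sum>k\<in>UNIV. E k / d k * Qf p2 p3 p4 (L a) (L k)) = E a"
proof -
  define c0 where "c0 = (\<Prod>k\<in>UNIV. L k)"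
  have Lsum: "L 1 + L 2 + L 3 + L 4 + L 5 = 0" using tr0 unfolding L_def sum_5 .
  have pc: "poly (charC lam) z = Cz p2 p3 p4 c0 z" for z
    unfolding charC_def poly_prod Cz_def p2_def p3_def p4_def c0_def
    using newton[OF Lsum, of z] by (simp add: prod_5 sum_5 L_def)
  have Cz0: "Cz p2 p3 p4 c0 (L m) = 0" for m
  proof -
    have "poly (charC lam) (L m) = 0"
      unfolding charC_def poly_prod L_def
      by (rule prod_zero) auto
    then show ?thesis using pc by simp
  qed
  have Lne: "L k \<noteq> L m" if "k \<noteq> m" for k m
    using inj that unfolding L_def inj_def by auto
  have Q0: "Qf p2 p3 p4 (L a) (L k) = 0" if "k \<noteq> a" for k
  proof -
    have "(L a - L k) * Qf p2 p3 p4 (L a) (L k) = 0"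
      using Qf_diff[of "L a" "L k" p2 p3 p4 c0] Cz0 by simp
    then show ?thesis using Lne[OF that] by simp
  qed
  define y where "y = L a"
  define Qp where "Qp = [: y^4 - p2/2*y^2 - p3/3*y + p2^2/8 - p4/4, y^3 - p2/2*y - p3/3, y^2 - p2/2, y, 1 :]"
  have cQ: "charC lam = [:-y, 1:] * Qp"
  proof -
    have "poly (charC lam) = poly ([:-y, 1:] * Qp)"
    proof
      fix z
      have "poly ([:-y, 1:] * Qp) z = (z - y) * Qf p2 p3 p4 z y"
        unfolding Qp_def poly_mult poly_Qp by simp
      also have "\<dots> = Cz p2 p3 p4 c0 z"
        using Qf_diff[of z y p2 p3 p4 c0] Cz0[of a] unfolding y_def by simp
      finally show "poly (charC lam) z = poly ([:-y, 1:] * Qp) z" using pc by simp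
    qed
    then show ?thesis by (simp add: poly_eq_poly_eq_iff)
  qed
  define R where "R = (\<Prod>m\<in>UNIV-{a}. [:- L m, 1:])"
  have cR: "charC lam = [:-y, 1:] * R"
    unfolding charC_def R_def y_def L_def
    by (subst prod.remove[of UNIV a]) auto
  have QR: "Qp = R"
  proof -
    have "[:-y, 1:] * Qp = [:-y, 1:] * R" using cQ cR by simp
    moreover have "[:-y, 1:] \<noteq> (0::complex poly)" by simp
    ultimately show ?thesis by (simp only: mult_cancel_left) simp
  qed
  have dQ: "d a = Qf p2 p3 p4 (L a) (L a)"
  proof -
    have "d a = poly (pderiv ([:-y, 1:] * Qp)) y"
      unfolding d_def cQ y_def ..
    also have "\<dots> = poly Qp y"
      by (simp only: pderiv_mult poly_add poly_mult) (simp add: pderiv_pCons)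
    finally show ?thesis unfolding Qp_def poly_Qp y_def .
  qed
  have dnz: "d a \<noteq> 0"
  proof -
    have "d a = poly R y" using dQ QR poly_Qp[of y p2 p3 p4 y] unfolding Qp_def y_def by simp
    also have "\<dots> = (\<Prod>m\<in>UNIV-{a}. y - L m)" unfolding R_def poly_prod by simp
    also have "\<dots> \<noteq> 0" unfolding y_def using Lne by (auto simp: prod_zero_iff)
    finally show ?thesis .
  qed
  have "(\<Sum>k\<in>UNIV. E k / d k * Qf p2 p3 p4 (L a) (L k)) = E a / d a * Qf p2 p3 p4 (L a) (L a)"
    by (subst sum.remove[of UNIV a]) (auto intro!: sum.neutral simp: Q0)
  also have "\<dots> = E a" using dQ dnz by simp
  finally show ?thesis .
qed
definition dg :: "('n::finite \<Rightarrow> complex) \<Rightarrow> complex^'n^'n" where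
  "dg \<mu> = (\<chi> i j. if i = j then \<mu> i else 0)"

lemma mpow_0: "mpow A 0 = mat 1" by (simp add: mpow_def)
lemma mpow_Suc: "mpow A (Suc n) = A ** mpow A n" by (simp add: mpow_def)
lemma mpow_1: "mpow A 1 = A" by (simp add: mpow_def)

lemma dg_1: "dg (\<lambda>k. 1) = mat 1"
  by (simp add: dg_def mat_def)


lemma mult_dg_nth: "(V ** dg \<mu>) $ i $ k = V $ i $ k * \<mu> k"
proof -
  have "(V ** dg \<mu>) $ i $ k = (\<Sum>j\<in>UNIV. if j = k then V $ i $ j * \<mu> j else 0)"
    unfolding dg_def matrix_matrix_mult_def by (simp only: vec_lambda_beta) (rule sum.cong[OF refl], simp)
  then show ?thesis by simp
qed

lemma dg_mult: "dg \<mu> ** dg \<nu> = dg (\<lambda>k. \<mu> k * \<nu> k)"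
  by (simp add: vec_eq_iff mult_dg_nth) (simp add: dg_def)

lemma VdB_nth: "(V ** dg \<mu> ** B) $ i $ j = (\<Sum>a\<in>UNIV. V $ i $ a * \<mu> a * B $ a $ j)"
  by (simp add: matrix_matrix_mult_def[of "V ** dg \<mu>"] mult_dg_nth)

lemma eig_cols:
  fixes A :: "complex^'n::finite^'n"
  assumes "\<And>k. A *v v k = \<mu> k *s v k"
  shows "A ** (\<chi> i k. v k $ i) = (\<chi> i k. v k $ i) ** dg \<mu>"
proof -
  have "(A ** (\<chi> i k. v k $ i)) $ i $ k = \<mu> k * v k $ i" for i k
  proof -
    have "(A ** (\<chi> i k. v k $ i)) $ i $ k = (A *v v k) $ i"
      by (simp add: matrix_matrix_mult_def matrix_vector_mult_def)
    then show ?thesis using assms by simp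
  qed
  then show ?thesis by (simp add: vec_eq_iff mult_dg_nth mult.commute)
qed

lemma mpow_V:
  assumes "A ** V = V ** dg \<mu>"
  shows "mpow A n ** V = V ** dg (\<lambda>k. \<mu> k ^ n)"
proof (induction n)
  case 0
  then show ?case by (simp add: mpow_0 dg_1)
next
  case (Suc n)
  have "mpow A (Suc n) ** V = A ** (mpow A n ** V)" by (simp add: mpow_Suc matrix_mul_assoc)
  also have "\<dots> = (A ** V) ** dg (\<lambda>k. \<mu> k ^ n)" by (simp add: Suc matrix_mul_assoc)
  also have "\<dots> = V ** (dg \<mu> ** dg (\<lambda>k. \<mu> k ^ n))" by (simp add: assms matrix_mul_assoc)
  also have "\<dots> = V ** dg (\<lambda>k. \<mu> k ^ Suc n)" by (simp add: dg_mult)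
  finally show ?case .
qed

lemma mpow_VB:
  assumes "A ** V = V ** dg \<mu>" "V ** B = mat 1"
  shows "mpow A n = V ** dg (\<lambda>k. \<mu> k ^ n) ** B"
proof -
  have "mpow A n = mpow A n ** (V ** B)" by (simp add: assms(2))
  also have "\<dots> = V ** dg (\<lambda>k. \<mu> k ^ n) ** B" by (simp add: mpow_V[OF assms(1)] matrix_mul_assoc)
  finally show ?thesis .
qed

lemma msc_VdB: "msc c (V ** dg \<mu> ** B) = V ** dg (\<lambda>k. c * \<mu> k) ** B"
  by (simp add: vec_eq_iff msc_def VdB_nth sum_distrib_left mult_ac)

lemma add_VdB: "(V ** dg \<mu> ** B) + (V ** dg \<nu> ** B) = V ** dg (\<lambda>k. \<mu> k + \<nu> k) ** B"
  by (simp add: vec_eq_iff VdB_nth sum.distrib[symmetric] algebra_simps)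

lemma trace_VdB:
  assumes "B ** V = mat 1"
  shows "trace (V ** dg \<mu> ** B) = (\<Sum>k\<in>UNIV. \<mu> k)"
proof -
  have "trace (V ** dg \<mu> ** B) = trace (B ** (V ** dg \<mu>))" by (rule trace_mul_sym)
  also have "\<dots> = trace (dg \<mu>)" by (simp add: matrix_mul_assoc assms)
  also have "\<dots> = (\<Sum>k\<in>UNIV. \<mu> k)" by (simp add: trace_def dg_def)
  finally show ?thesis .
qed

lemma mexp_VB:
  assumes "A ** V = V ** dg \<mu>" "V ** B = mat 1"
  shows "mexp A = V ** dg (\<lambda>k. exp (\<mu> k)) ** B"
proof -
  have "(\<lambda>n. mpow A n $ i $ j / of_nat (fact n)) sums (V ** dg (\<lambda>k. exp (\<mu> k)) ** B) $ i $ j" for i j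
  proof -
    have "(\<lambda>n. \<Sum>a\<in>UNIV. V $ i $ a * B $ a $ j * (\<mu> a ^ n / of_nat (fact n))) sums (\<Sum>a\<in>UNIV. V $ i $ a * B $ a $ j * exp (\<mu> a))"
      by (intro sums_sum sums_mult exp_sums)
    then show ?thesis
      by (simp add: mpow_VB[OF assms] VdB_nth sum_divide_distrib mult_ac)
  qed
  then show ?thesis unfolding mexp_def by (simp add: vec_eq_iff sums_iff)
qed

lemma msc_mv: "msc c A *v x = c *s (A *v x)"
  by (simp add: vec_eq_iff msc_def matrix_vector_mult_def sum_distrib_left mult_ac)

lemma indep_inv:
  fixes A :: "complex^'n::finite^'n" and v :: "'n \<Rightarrow> complex^'n"
  assumes nz: "\<And>k. v k \<noteq> 0" and AV: "A ** (\<chi> i k. v k $ i) = (\<chi> i k. v k $ i) ** dg \<mu>" and inj: "inj \<mu>"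
  shows "\<exists>B. B ** (\<chi> i k. v k $ i) = mat 1"
  unfolding matrix_left_invertible_ker
proof (intro allI impI)
  fix c assume Vc: "(\<chi> i k. v k $ i) *v c = 0"
  define V where "V = ((\<chi> i k. v k $ i) :: complex^'n^'n)"
  have pw: "(\<Sum>k\<in>UNIV. v k $ i * \<mu> k ^ n * c $ k) = 0" for i n
  proof -
    have "(V ** dg (\<lambda>k. \<mu> k ^ n)) *v c = mpow A n *v (V *v c)"
      using mpow_V[OF AV[folded V_def], of n] by (simp add: matrix_vector_mul_assoc)
    also have "\<dots> = 0" using Vc unfolding V_def by simp
    finally have "((V ** dg (\<lambda>k. \<mu> k ^ n)) *v c) $ i = 0" by simp
    then show ?thesis by (simp add: matrix_vector_mult_def mult_dg_nth V_def)
  qed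
  have pp: "(\<Sum>k\<in>UNIV. v k $ i * poly p (\<mu> k) * c $ k) = 0" for i p
  proof -
    have "(\<Sum>k\<in>UNIV. v k $ i * poly p (\<mu> k) * c $ k) = (\<Sum>n\<le>degree p. coeff p n * (\<Sum>k\<in>UNIV. v k $ i * \<mu> k ^ n * c $ k))"
      by (simp add: poly_altdef sum_distrib_left sum_distrib_right mult_ac sum.swap[of _ UNIV])
    then show ?thesis by (simp add: pw)
  qed
  show "c = 0"
    unfolding vec_eq_iff
  proof
    fix j
    define p where "p = (\<Prod>m\<in>UNIV-{j}. [:- \<mu> m, 1:])"
    have p0: "poly p (\<mu> k) = 0" if "k \<noteq> j" for k
      unfolding p_def poly_prod by (rule prod_zero) (use that in auto)
    have pj: "poly p (\<mu> j) \<noteq> 0"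
      unfolding p_def poly_prod using inj by (auto simp: prod_zero_iff inj_def)
    obtain i where i: "v j $ i \<noteq> 0" using nz[of j] by (auto simp: vec_eq_iff)
    have "(\<Sum>k\<in>UNIV. v k $ i * poly p (\<mu> k) * c $ k) = v j $ i * poly p (\<mu> j) * c $ j"
      by (subst sum.remove[of UNIV j]) (auto intro!: sum.neutral simp: p0)
    then have "v j $ i * poly p (\<mu> j) * c $ j = 0" using pp by simp
    then show "c $ j = 0 $ j" using i pj by simp
  qed
qed
lemma sum_Qf: "(\<Sum>k\<in>A. s k * Qf p2 p3 p4 x (y k)) =
   (x^4 - p2/2*x^2 - p3/3*x + p2^2/8 - p4/4) * (\<Sum>k\<in>A. s k * y k ^ 0)
 + (x^3 - p2/2*x - p3/3) * (\<Sum>k\<in>A. s k * y k ^ 1) + (x^2 - p2/2) * (\<Sum>k\<in>A. s k * y k ^ 2)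
 + x * (\<Sum>k\<in>A. s k * y k ^ 3) + (\<Sum>k\<in>A. s k * y k ^ 4)" (is "_ = ?R")
proof -
  have "(\<Sum>k\<in>A. s k * Qf p2 p3 p4 x (y k)) = (\<Sum>k\<in>A.
     (x^4 - p2/2*x^2 - p3/3*x + p2^2/8 - p4/4) * (s k * y k ^ 0)
   + (x^3 - p2/2*x - p3/3) * (s k * y k ^ 1) + (x^2 - p2/2) * (s k * y k ^ 2)
   + x * (s k * y k ^ 3) + (s k * y k ^ 4))"
    by (rule sum.cong[OF refl]) (simp add: Qf_def algebra_simps power2_eq_square power3_eq_cube power4_eq_xxxx)
  also have "\<dots> = ?R" by (simp only: sum.distrib sum_distrib_left)
  finally show ?thesis .
qed

theorem mainTheorem3:
  fixes H :: "complex^5^5" and lam :: "5 \<Rightarrow> real" and t :: real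
  assumes "hermitian H"
    and "trace H = 0"
    and "inj lam"
    and "\<forall>k. \<exists>v. v \<noteq> 0 \<and> H *v v = complex_of_real (lam k) *s v"
  shows "mexp (msc (\<i> * complex_of_real t) H) =
     msc (nderiv 0 (F5 lam) t) (mpow H 4)
   + msc (- \<i> * nderiv 1 (F5 lam) t) (mpow H 3)
   + msc (- (trace (mpow H 2) / 2 * nderiv 0 (F5 lam) t + nderiv 2 (F5 lam) t)) (mpow H 2)
   + msc (- trace (mpow H 3) / 3 * nderiv 0 (F5 lam) t
          + \<i> * trace (mpow H 2) / 2 * nderiv 1 (F5 lam) t
          + \<i> * nderiv 3 (F5 lam) t) H
   + msc ((trace (mpow H 2))\<^sup>2 / 8 * nderiv 0 (F5 lam) t - trace (mpow H 4) / 4 * nderiv 0 (F5 lam) t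
          + trace (mpow H 3) / 3 * \<i> * nderiv 1 (F5 lam) t
          + trace (mpow H 2) / 2 * nderiv 2 (F5 lam) t
          + nderiv 4 (F5 lam) t) (mat 1)"
proof -
  define L where "L = (\<lambda>k. complex_of_real (lam k))"
  from assms(4) obtain v where v: "\<And>k. v k \<noteq> 0" "\<And>k. H *v v k = L k *s v k"
    unfolding L_def by metis
  define V where "V = ((\<chi> i k. v k $ i) :: complex^5^5)"
  have HV: "H ** V = V ** dg L" unfolding V_def by (rule eig_cols) (rule v(2))
  have injL: "inj L" using assms(3) unfolding L_def inj_def by simp
  obtain B where BV: "B ** V = mat 1" using indep_inv[of v H L] v(1) HV injL unfolding V_def by blast
  have VB: "V ** B = mat 1" using BV matrix_left_right_inverse by blast
  have Hp: "\<And>n. mpow H n = V ** dg (\<lambda>k. L k ^ n) ** B" using mpow_VB[OF HV VB] .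
  have H1: "H = V ** dg L ** B" using Hp[of 1] by (simp only: mpow_1 power_one_right)
  have I1: "mat 1 = V ** dg (\<lambda>k. 1) ** B" by (simp add: dg_1 VB)
  have tr: "\<And>n. trace (mpow H n) = (\<Sum>k\<in>UNIV. L k ^ n)" using Hp trace_VdB[OF BV] by simp
  have tr0: "(\<Sum>k\<in>UNIV. complex_of_real (lam k)) = 0" using assms(2) tr[of 1] unfolding mpow_1 L_def by simp
  have cHV: "msc (\<i> * complex_of_real t) H ** V = V ** dg (\<lambda>k. \<i> * complex_of_real t * L k)"
    unfolding V_def by (rule eig_cols) (simp add: msc_mv v(2))
  have mexpeq: "mexp (msc (\<i> * complex_of_real t) H) = V ** dg (\<lambda>k. exp (\<i> * complex_of_real t * L k)) ** B"
    by (rule mexp_VB[OF cHV VB])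
  show ?thesis
    unfolding mexpeq
    unfolding tr
    unfolding Hp
    apply (simp only: H1 I1 msc_VdB add_VdB)
    apply (rule arg_cong[where f="\<lambda>\<mu>. V ** dg \<mu> ** B"])
    apply (rule ext)
    subgoal for a
    proof -
      define d where "d = (\<lambda>k. poly (pderiv (charC lam)) (L k))"
      define s where "s = (\<lambda>k. exp (\<i> * complex_of_real (lam k * t)) / d k)"
      define M where "M = (\<lambda>m. \<Sum>k\<in>UNIV. s k * L k ^ m)"
      have Nm: "nderiv m (F5 lam) t = \<i>^m * M m" for m
        unfolding nderiv_F5 M_def s_def d_def L_def
        by (simp add: sum_distrib_left power_mult_distrib divide_inverse mult_ac)
      have key: "(\<Sum>k\<in>UNIV. s k * Qf (\<Sum>k\<in>UNIV. L k ^ 2) (\<Sum>k\<in>UNIV. L k ^ 3) (\<Sum>k\<in>UNIV. L k ^ 4) (L a) (L k))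
          = exp (\<i> * complex_of_real (lam a * t))"
        using scalar_main[OF assms(3) tr0, of "\<lambda>k. exp (\<i> * complex_of_real (lam k * t))" a]
        unfolding s_def d_def L_def by simp
      have ex: "exp (\<i> * complex_of_real t * L a) = exp (\<i> * complex_of_real (lam a * t))"
        by (simp add: L_def mult_ac)
      have e: "exp (\<i> * complex_of_real t * L a) = (\<Sum>k\<in>UNIV. s k * Qf (\<Sum>k\<in>UNIV. L k ^ 2) (\<Sum>k\<in>UNIV. L k ^ 3) (\<Sum>k\<in>UNIV. L k ^ 4) (L a) (L k))"
        using key ex by simp
      have ii: "\<i> * \<i> = -1" by simp
      show ?thesis
        unfolding e sum_Qf Nm M_def using ii by algebra
    qed
    done
qed
end
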